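(* For every permutation $w$ of $\{1,\ldots,n\}$, $$\mathrm{wt}(w)=\prod_{(\alpha,\beta)}\frac{N(\alpha,\beta)}{D(\alpha,\beta)},$$ where the product runs over all ordered pairs of node labels $(\alpha,\beta)$ of the tree $T(w^{-1})$ such that $\alpha$ lies in the left subtree of the node $\beta$.
   Context: Work in $\mathbb{Q}(x_1,x_2,\ldots)$ with the field endomorphism $F$ given by $F(x_i)=x_{i+1}$. Define $[n]:=x_1+\cdots+x_n$, $[0]!:=1$, $[n]!:=[n]\cdot F([n-1]!)=\prod_{j=0}^{n-1}F^j[n-j]$. For a $k$-element set $S=\{i_1>\cdots>i_k\}$ of positive integers, $\mathrm{wt}(S):=\frac{\prod_{j=1}^k F^{i_j-1}[j]}{[k]!}$ ($\mathrm{wt}(\emptyset)=1$). For a permutation $w=(w_1,\ldots,w_n)$ in one-line notation, $\mathrm{wt}(w)$ is defined recursively: the empty permutation has weight $1$; otherwise let $k:=w_1-1$, $S(w):=\{i:w_i\le k\}$, $a$ the permutation of $\{1,\ldots,k\}$ listing the values $w_i\le k$ in order of increasing $i$, and $\hat b$ the permutation of $\{1,\ldots,n-k-1\}$ listing the values $w_i-k-1$ for $w_i>k+1$ in order of increasing $i$; then $\mathrm{wt}(w):=\mathrm{wt}(S(w))\,\mathrm{wt}(a)\,F^{k+1}(\mathrm{wt}(\hat b))$. For a word $v=v_1\cdots v_m$ with distinct letters, its increasing binary tree $T(v)$ is defined recursively: empty if $m=0$; otherwise, if $v_j$ is the smallest letter, $T(v)$ has root labelled $v_j$, left subtree $T(v_1\cdots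 v_{j-1})$ and right subtree $T(v_{j+1}\cdots v_m)$. Here $w^{-1}$ is the word $w^{-1}(1)w^{-1}(2)\cdots w^{-1}(n)$. For node labels $\alpha,\beta$ of $T(w^{-1})$ with $\alpha$ in the left subtree of $\beta$, let $\ell=\ell(\alpha,\beta)$ be the number of nodes in the left subtree of $\beta$ with label $\geq\alpha$, and $r=r(\alpha,\beta)$ the number of nodes in the right subtree of $\beta$ with label $<\alpha$. Define $D(\alpha,\beta):=x_{w(\beta)-1}+x_{w(\beta)-2}+\cdots+x_{w(\beta)-\ell}=F^{w(\beta)-\ell-1}[\ell]$ and $N(\alpha,\beta):=F^{r+1}(D(\alpha,\beta))=F^{w(\beta)+r-\ell}[\ell]$. *)

theory Defs
  imports Complex_Main "HOL-Library.Tree"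
begin

text \<open>Elements of Q(x_1,x_2,...) are represented by their evaluation maps
  (nat => real) => real on the positive orthant; x 0 is unused, variables are x 1, x 2, ...\<close>

type_synonym rfun = "(nat \<Rightarrow> real) \<Rightarrow> real"

definition Fpow :: "nat \<Rightarrow> rfun \<Rightarrow> rfun" where
  "Fpow k f = (\<lambda>x. f (\<lambda>i. x (i + k)))"

definition brk :: "nat \<Rightarrow> rfun" where
  "brk n = (\<lambda>x. \<Sum>i=1..n. x i)"

definition brkfact :: "nat \<Rightarrow> rfun" where
  "brkfact n = (\<lambda>x. \<Prod>j<n. Fpow j (brk (n - j)) x)"

definition wtS :: "nat set \<Rightarrow> rfun" where
  "wtS S = (let k = card S; L = rev (sorted_list_of_set S) in
     (\<lambda>x. (\<Prod>j=1..k. Fpow (L ! (j - 1) - 1) (brk j) x) / brkfact k x))"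

text \<open>wt(w) for a permutation in one-line notation (list w_1 ... w_n)\<close>
fun wt :: "nat list \<Rightarrow> rfun" where
  "wt [] = (\<lambda>x. 1)"
| "wt (v # r) =
     (let w = v # r; k = v - 1;
          S = {i. 1 \<le> i \<and> i \<le> length w \<and> w ! (i - 1) \<le> k};
          a = filter (\<lambda>u. u \<le> k) r;
          bh = map (\<lambda>u. u - k - 1) (filter (\<lambda>u. u > k + 1) r)
      in (\<lambda>x. wtS S x * wt a x * Fpow (k + 1) (wt bh) x))"

definition inv_word :: "nat list \<Rightarrow> nat list" where
  "inv_word w = map (\<lambda>j. (LEAST i. i < length w \<and> w ! i = j) + 1) [1..<length w + 1]"

function incr_tree :: "nat list \<Rightarrow> nat tree" where
  "incr_tree v = (if v = [] then Leaf else
     (let m = Min (set v) in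
       Node (incr_tree (takeWhile (\<lambda>a. a \<noteq> m) v)) m
            (incr_tree (tl (dropWhile (\<lambda>a. a \<noteq> m) v)))))"
  by pat_completeness auto
termination
proof (relation "measure length")
  fix v :: "nat list" and m
  assume "v \<noteq> []" "m = Min (set v)"
  then have mv: "m \<in> set v" by simp
  show "(takeWhile (\<lambda>a. a \<noteq> m) v, v) \<in> measure length"
    using mv by (induction v) auto
  show "(tl (dropWhile (\<lambda>a. a \<noteq> m) v), v) \<in> measure length"
    using mv by (induction v) auto
qed auto

text \<open>For alpha in the left subtree l of the node beta (right subtree r) of T(w^{-1}):
  ell = #{gamma in l. gamma >= alpha}, rr = #{gamma in r. gamma < alpha},
  D = F^{w(beta)-ell-1}[ell], N = F^{w(beta)+rr-ell}[ell].\<close>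
definition ell :: "nat tree \<Rightarrow> nat \<Rightarrow> nat" where
  "ell l \<alpha> = card {\<gamma> \<in> set_tree l. \<gamma> \<ge> \<alpha>}"

definition rr :: "nat tree \<Rightarrow> nat \<Rightarrow> nat" where
  "rr r \<alpha> = card {\<gamma> \<in> set_tree r. \<gamma> < \<alpha>}"

definition Dfac :: "nat list \<Rightarrow> nat tree \<Rightarrow> nat \<Rightarrow> nat \<Rightarrow> rfun" where
  "Dfac w l \<beta> \<alpha> = Fpow (w ! (\<beta> - 1) - ell l \<alpha> - 1) (brk (ell l \<alpha>))"

definition Nfac :: "nat list \<Rightarrow> nat tree \<Rightarrow> nat \<Rightarrow> nat tree \<Rightarrow> nat \<Rightarrow> rfun" where
  "Nfac w l \<beta> r \<alpha> = Fpow (w ! (\<beta> - 1) + rr r \<alpha> - ell l \<alpha>) (brk (ell l \<alpha>))"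

end

theory Submission
  imports Defs
begin

declare incr_tree.simps[simp del]

lemma incr_tree_Node:
  assumes "v \<noteq> []"
  shows "incr_tree v = Node (incr_tree (takeWhile (\<lambda>a. a \<noteq> Min (set v)) v)) (Min (set v))
            (incr_tree (tl (dropWhile (\<lambda>a. a \<noteq> Min (set v)) v)))"
  using assms by (subst incr_tree.simps) (simp add: Let_def)

lemma incr_tree_Nil: "incr_tree [] = Leaf"
  by (subst incr_tree.simps) simp

lemma inorder_incr_tree: "inorder (incr_tree v) = v"
proof (induction v rule: incr_tree.induct)
  case (1 v)
  show ?case
  proof (cases "v = []")
    case True thus ?thesis by (simp add: incr_tree_Nil)
  next
    case False
    define m where "m = Min (set v)"
    have mv: "m \<in> set v" using False by (simp add: m_def)
    have ne: "dropWhile (\<lambda>a. a \<noteq> m) v \<noteq> []" using mv by simp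
    have hd: "hd (dropWhile (\<lambda>a. a \<noteq> m) v) = m" using hd_dropWhile[OF ne] by simp
    have "dropWhile (\<lambda>a. a \<noteq> m) v = m # tl (dropWhile (\<lambda>a. a \<noteq> m) v)"
      using ne hd by (metis list.collapse)
    hence "takeWhile (\<lambda>a. a \<noteq> m) v @ m # tl (dropWhile (\<lambda>a. a \<noteq> m) v) = v"
      by (metis takeWhile_dropWhile_id)
    thus ?thesis using 1[OF False m_def] False
      by (simp add: incr_tree_Node[OF False] m_def[symmetric])
  qed
qed

lemma set_incr_tree: "set_tree (incr_tree v) = set v"
  by (metis inorder_incr_tree set_inorder)

lemma incr_tree_map:
  "strict_mono_on (set v) f \<Longrightarrow> incr_tree (map f v) = map_tree f (incr_tree v)"
proof (induction v rule: incr_tree.induct)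
  case (1 v)
  show ?case
  proof (cases "v = []")
    case True thus ?thesis by (simp add: incr_tree_Nil)
  next
    case False
    define m where "m = Min (set v)"
    have mv: "m \<in> set v" using False by (simp add: m_def)
    have mle: "\<And>y. y \<in> set v \<Longrightarrow> m \<le> y" by (simp add: m_def)
    have inj: "inj_on f (set v)" using 1(3) by (rule strict_mono_on_imp_inj_on)
    have fm: "Min (f ` set v) = f m"
    proof (rule Min_eqI)
      show "finite (f ` set v)" by simp
      show "f m \<in> f ` set v" using mv by simp
      fix y assume "y \<in> f ` set v"
      then obtain z where z: "z \<in> set v" "y = f z" by auto
      show "f m \<le> y"
      proof (cases "m = z")
        case True thus ?thesis using z by simp
      next
        case False
        hence "m < z" using mle[OF z(1)] by simp
        thus ?thesis using strict_mono_onD[OF 1(3) mv z(1)] z by simp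
      qed
    qed
    have eqv: "\<And>a. a \<in> set v \<Longrightarrow> (f a \<noteq> f m) = (a \<noteq> m)"
      using inj mv by (auto dest: inj_onD)
    have tw: "takeWhile (\<lambda>a. a \<noteq> f m) (map f v) = map f (takeWhile (\<lambda>a. a \<noteq> m) v)"
      by (simp add: takeWhile_map comp_def eqv cong: takeWhile_cong)
    have dw: "dropWhile (\<lambda>a. a \<noteq> f m) (map f v) = map f (dropWhile (\<lambda>a. a \<noteq> m) v)"
      by (simp add: dropWhile_map comp_def eqv cong: dropWhile_cong)
    have s1: "strict_mono_on (set (takeWhile (\<lambda>a. a \<noteq> m) v)) f"
      by (rule monotone_on_subset[OF 1(3)]) (meson set_takeWhileD subsetI)
    have s2: "strict_mono_on (set (tl (dropWhile (\<lambda>a. a \<noteq> m) v))) f"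
      by (rule monotone_on_subset[OF 1(3)]) (metis list.set_sel(2) set_dropWhileD subsetI tl_Nil empty_iff list.set(1))
    have nn: "map f v \<noteq> []" using False by simp
    show ?thesis
      apply (subst incr_tree_Node[OF nn])
      apply (subst incr_tree_Node[OF False])
      using 1(1)[OF False m_def s1] 1(2)[OF False m_def s2]
      by (simp add: fm tw dw map_tl m_def[symmetric])
  qed
qed

definition fac :: "(nat \<Rightarrow> nat) \<Rightarrow> nat tree \<Rightarrow> nat \<Rightarrow> nat tree \<Rightarrow> nat \<Rightarrow> rfun" where
  "fac val l \<beta> r \<alpha> x = Fpow (val \<beta> + rr r \<alpha> - ell l \<alpha>) (brk (ell l \<alpha>)) x /
      Fpow (val \<beta> - ell l \<alpha> - 1) (brk (ell l \<alpha>)) x"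

fun Qr :: "(nat \<Rightarrow> nat) \<Rightarrow> nat tree \<Rightarrow> rfun" where
  "Qr val Leaf x = 1"
| "Qr val (Node l \<beta> r) x = (\<Prod>\<alpha>\<in>set_tree l. fac val l \<beta> r \<alpha> x) * Qr val l x * Qr val r x"

fun bnd :: "(nat \<Rightarrow> nat) \<Rightarrow> nat tree \<Rightarrow> bool" where
  "bnd val Leaf = True"
| "bnd val (Node l \<beta> r) = (card (set_tree l) < val \<beta> \<and> bnd val l \<and> bnd val r)"

lemma Qr_cong: "(\<forall>\<beta>\<in>set_tree t. val \<beta> = val' \<beta>) \<Longrightarrow> Qr val t x = Qr val' t x"
  by (induction t) (auto simp: fac_def)

lemma bnd_cong: "(\<forall>\<beta>\<in>set_tree t. val \<beta> = val' \<beta>) \<Longrightarrow> bnd val t = bnd val' t"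
  by (induction t) auto

lemma bnd_mono: "bnd val t \<Longrightarrow> (\<forall>\<beta>\<in>set_tree t. val \<beta> \<le> val' \<beta>) \<Longrightarrow> bnd val' t"
  by (induction t) fastforce+

lemma smo_le_iff:
  fixes f :: "nat \<Rightarrow> nat"
  assumes "strict_mono_on A f" "a \<in> A" "b \<in> A"
  shows "(f a \<le> f b) = (a \<le> b)" "(f a < f b) = (a < b)"
  using strict_mono_onD[OF assms(1) assms(2) assms(3)] strict_mono_onD[OF assms(1) assms(3) assms(2)]
  by (metis linorder_not_le order_less_imp_le nat_neq_iff)+

lemma ell_map:
  fixes f :: "nat \<Rightarrow> nat"
  assumes "strict_mono_on (set_tree l) f" "\<alpha> \<in> set_tree l"
  shows "ell (map_tree f l) (f \<alpha>) = ell l \<alpha>"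
proof -
  have inj: "inj_on f (set_tree l)" by (rule strict_mono_on_imp_inj_on[OF assms(1)])
  have "{\<gamma> \<in> set_tree (map_tree f l). \<gamma> \<ge> f \<alpha>} = f ` {\<gamma> \<in> set_tree l. \<gamma> \<ge> \<alpha>}"
    using smo_le_iff(1)[OF assms(1) assms(2)] by (auto simp: tree.set_map)
  moreover have "card (f ` {\<gamma> \<in> set_tree l. \<gamma> \<ge> \<alpha>}) = card {\<gamma> \<in> set_tree l. \<gamma> \<ge> \<alpha>}"
    by (rule card_image) (rule inj_on_subset[OF inj], auto)
  ultimately show ?thesis by (simp add: ell_def)
qed

lemma rr_map:
  fixes f :: "nat \<Rightarrow> nat"
  assumes "strict_mono_on (insert \<alpha> (set_tree r)) f"
  shows "rr (map_tree f r) (f \<alpha>) = rr r \<alpha>"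
proof -
  have inj: "inj_on f (set_tree r)" using strict_mono_on_imp_inj_on[OF assms(1)] by (rule inj_on_subset) auto
  have "{\<gamma> \<in> set_tree (map_tree f r). \<gamma> < f \<alpha>} = f ` {\<gamma> \<in> set_tree r. \<gamma> < \<alpha>}"
    using smo_le_iff(2)[OF assms(1)] by (auto simp: tree.set_map)
  moreover have "card (f ` {\<gamma> \<in> set_tree r. \<gamma> < \<alpha>}) = card {\<gamma> \<in> set_tree r. \<gamma> < \<alpha>}"
    by (rule card_image) (rule inj_on_subset[OF inj], auto)
  ultimately show ?thesis by (simp add: rr_def)
qed

lemma Qr_map:
  fixes f :: "nat \<Rightarrow> nat"
  shows "strict_mono_on (set_tree t) f \<Longrightarrow> Qr val (map_tree f t) x = Qr (val \<circ> f) t x"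
proof (induction t)
  case Leaf thus ?case by simp
next
  case (Node l b r)
  have sl: "strict_mono_on (set_tree l) f" by (rule monotone_on_subset[OF Node(3)]) auto
  have sr: "strict_mono_on (set_tree r) f" by (rule monotone_on_subset[OF Node(3)]) auto
  have inj: "inj_on f (set_tree l)" by (rule strict_mono_on_imp_inj_on[OF sl])
  have "(\<Prod>\<alpha>\<in>set_tree (map_tree f l). fac val (map_tree f l) (f b) (map_tree f r) \<alpha> x)
      = (\<Prod>\<alpha>\<in>set_tree l. fac val (map_tree f l) (f b) (map_tree f r) (f \<alpha>) x)"
    by (simp add: tree.set_map prod.reindex[OF inj])
  also have "\<dots> = (\<Prod>\<alpha>\<in>set_tree l. fac (val \<circ> f) l b r \<alpha> x)"
  proof (rule prod.cong[OF refl])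
    fix \<alpha> assume a: "\<alpha> \<in> set_tree l"
    have s2: "strict_mono_on (insert \<alpha> (set_tree r)) f" by (rule monotone_on_subset[OF Node(3)]) (use a in auto)
    show "fac val (map_tree f l) (f b) (map_tree f r) (f \<alpha>) x = fac (val \<circ> f) l b r \<alpha> x"
      by (simp add: fac_def ell_map[OF sl a] rr_map[OF s2])
  qed
  finally show ?case using Node(1)[OF sl] Node(2)[OF sr] by (simp add: comp_def)
qed

lemma bnd_map:
  fixes f :: "nat \<Rightarrow> nat"
  shows "strict_mono_on (set_tree t) f \<Longrightarrow> bnd val (map_tree f t) = bnd (val \<circ> f) t"
proof (induction t)
  case Leaf thus ?case by simp
next
  case (Node l b r)
  have sl: "strict_mono_on (set_tree l) f" by (rule monotone_on_subset[OF Node(3)]) auto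
  have sr: "strict_mono_on (set_tree r) f" by (rule monotone_on_subset[OF Node(3)]) auto
  have inj: "inj_on f (set_tree l)" by (rule strict_mono_on_imp_inj_on[OF sl])
  show ?case using Node(1)[OF sl] Node(2)[OF sr] by (simp add: tree.set_map card_image[OF inj])
qed

lemma Fpow_brk: "Fpow k (brk n) x = (\<Sum>i=1..n. x (i + k))"
  by (simp add: Fpow_def brk_def)

lemma ell_le: "ell l \<alpha> \<le> card (set_tree l)"
  unfolding ell_def by (rule card_mono) auto

lemma Qr_shift:
  "bnd val t \<Longrightarrow> Qr (\<lambda>\<beta>. val \<beta> + c) t x = Qr val t (\<lambda>i. x (i + c))"
proof (induction t)
  case Leaf thus ?case by simp
next
  case (Node l b r)
  have "(\<Prod>\<alpha>\<in>set_tree l. fac (\<lambda>\<beta>. val \<beta> + c) l b r \<alpha> x) = (\<Prod>\<alpha>\<in>set_tree l. fac val l b r \<alpha> (\<lambda>i. x (i + c)))"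
  proof (rule prod.cong[OF refl])
    fix \<alpha> assume a: "\<alpha> \<in> set_tree l"
    have lt: "ell l \<alpha> < val b" using ell_le[of l \<alpha>] Node(3) by simp
    have e1: "val b + c + rr r \<alpha> - ell l \<alpha> = (val b + rr r \<alpha> - ell l \<alpha>) + c" using lt by simp
    have e2: "val b + c - ell l \<alpha> - 1 = (val b - ell l \<alpha> - 1) + c" using lt by simp
    show "fac (\<lambda>\<beta>. val \<beta> + c) l b r \<alpha> x = fac val l b r \<alpha> (\<lambda>i. x (i + c))"
      unfolding fac_def Fpow_brk e1 e2 by (simp add: add.assoc)
  qed
  thus ?case using Node by simp
qed

lemma prod_subtrees:
  "distinct (inorder t) \<Longrightarrow>
   (\<Prod>s\<in>subtrees t. case s of Leaf \<Rightarrow> 1 | Node l \<beta> r \<Rightarrow> (\<Prod>\<alpha>\<in>set_tree l. fac val l \<beta> r \<alpha> x)) = Qr val t x"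
proof (induction t)
  case Leaf thus ?case by simp
next
  case (Node l b r)
  let ?g = "\<lambda>s. case s of Leaf \<Rightarrow> 1 | Node l \<beta> r \<Rightarrow> (\<Prod>\<alpha>\<in>set_tree l. fac val l \<beta> r \<alpha> x)"
  have dl: "distinct (inorder l)" and dr: "distinct (inorder r)" using Node(3) by auto
  have disj: "set_tree l \<inter> set_tree r = {}" using Node(3) by (auto simp flip: set_inorder)
  have fin: "finite (subtrees t)" for t :: "nat tree" by (induction t) auto
  have notin: "Node l b r \<notin> subtrees l \<union> subtrees r"
    using size_subtrees[of "Node l b r" l] size_subtrees[of "Node l b r" r] by auto
  have int: "\<forall>s\<in>subtrees l \<inter> subtrees r. ?g s = 1"
  proof
    fix s assume s: "s \<in> subtrees l \<inter> subtrees r"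
    show "?g s = 1"
    proof (cases s)
      case Leaf thus ?thesis by simp
    next
      case (Node l' a r')
      thus ?thesis using s disj in_set_tree_if[of l' a r' l] in_set_tree_if[of l' a r' r] by auto
    qed
  qed
  have "prod ?g (subtrees l \<union> subtrees r) = prod ?g (subtrees l) * prod ?g (subtrees r)"
    using prod.union_inter[OF fin fin, of ?g l r] prod.neutral[OF int] by simp
  hence "prod ?g (subtrees (Node l b r)) = ?g (Node l b r) * (prod ?g (subtrees l) * prod ?g (subtrees r))"
    using notin fin by (simp add: prod.insert)
  thus ?case using Node(1)[OF dl] Node(2)[OF dr] by (simp add: mult.assoc)
qed



definition ix :: "nat list \<Rightarrow> nat \<Rightarrow> nat" where
  "ix u j = (LEAST i. i < length u \<and> u ! i = j)"

lemma inv_word_ix: "inv_word w = map (\<lambda>j. ix w j + 1) [1..<length w + 1]"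
  by (simp add: inv_word_def ix_def)

lemma ix_in: assumes "j \<in> set u" shows "ix u j < length u" "u ! (ix u j) = j"
proof -
  have ex: "\<exists>i. i < length u \<and> u ! i = j" using assms by (simp add: in_set_conv_nth)
  show "ix u j < length u" "u ! (ix u j) = j" using LeastI_ex[OF ex] by (simp_all add: ix_def)
qed

lemma ix_nth: assumes "distinct u" "i < length u" shows "ix u (u ! i) = i"
  unfolding ix_def
  by (rule Least_equality) (use assms nth_eq_iff_index_eq in auto)

lemma filter_nth_rank:
  assumes "i < length u" "P (u ! i)"
  shows "length (filter P (take i u)) < length (filter P u)"
        "filter P u ! length (filter P (take i u)) = u ! i"
proof -
  have u: "u = take i u @ u ! i # drop (Suc i) u" using assms(1) by (rule id_take_nth_drop)
  have f: "filter P u = filter P (take i u) @ u ! i # filter P (drop (Suc i) u)"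
    using assms(2) by (subst u) simp
  show "length (filter P (take i u)) < length (filter P u)" by (subst f) simp
  show "filter P u ! length (filter P (take i u)) = u ! i" by (subst f) (simp add: nth_append)
qed

lemma rank_mono:
  assumes "i < j" "j \<le> length u" "P (u ! i)"
  shows "length (filter P (take i u)) < length (filter P (take j u))"
proof -
  have j: "j = Suc i + (j - Suc i)" using assms by simp
  have "take j u = take (Suc i) u @ take (j - Suc i) (drop (Suc i) u)"
    by (subst j) (rule take_add)
  moreover have "take (Suc i) u = take i u @ [u ! i]" using assms by (simp add: take_Suc_conv_app_nth)
  ultimately show ?thesis using assms(3) by simp
qed

lemma card_ge_nth:
  fixes L :: "nat list"
  assumes "sorted_wrt (<) L" "m < length L"
  shows "card {\<gamma> \<in> set L. \<gamma> \<ge> L ! m} = length L - m"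
proof -
  have dist: "distinct L" using assms(1) strict_sorted_iff by auto
  have "{\<gamma> \<in> set L. \<gamma> \<ge> L ! m} = (\<lambda>t. L ! t) ` {m..<length L}"
  proof (rule set_eqI, rule iffI)
    fix \<gamma> assume "\<gamma> \<in> {\<gamma> \<in> set L. \<gamma> \<ge> L ! m}"
    then obtain t where t: "t < length L" "\<gamma> = L ! t" "L ! t \<ge> L ! m" by (auto simp: in_set_conv_nth)
    have "\<not> t < m"
    proof
      assume "t < m"
      hence "L ! t < L ! m" using sorted_wrt_nth_less[OF assms(1) _ assms(2)] by blast
      thus False using t(3) by simp
    qed
    thus "\<gamma> \<in> (\<lambda>t. L ! t) ` {m..<length L}" using t by auto
  next
    fix \<gamma> assume "\<gamma> \<in> (\<lambda>t. L ! t) ` {m..<length L}"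
    then obtain t where t: "m \<le> t" "t < length L" "\<gamma> = L ! t" by auto
    have "L ! m \<le> L ! t" using sorted_wrt_nth_less[OF assms(1), of m t] t
      by (cases "m = t") auto
    thus "\<gamma> \<in> {\<gamma> \<in> set L. \<gamma> \<ge> L ! m}" using t by auto
  qed
  moreover have "inj_on (\<lambda>t. L ! t) {m..<length L}"
    using dist by (auto simp: inj_on_def nth_eq_iff_index_eq)
  ultimately show ?thesis by (simp add: card_image)
qed



lemma root:
  fixes S R :: "nat set" and k n :: nat and val :: "nat \<Rightarrow> nat"
  assumes fin: "finite S" and cS: "card S = k" and part: "S \<union> R \<union> {1} = {1..n}"
    and d1: "S \<inter> R = {}" "1 \<notin> S" "1 \<notin> R"
    and sl: "set_tree l = S" and sr: "set_tree r = R" and v: "val b = k + 1"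
  shows "wtS S x = (\<Prod>\<alpha>\<in>S. fac val l b r \<alpha> x)"
proof -
  define Ls where "Ls = sorted_list_of_set S"
  have sLs: "set Ls = S" and ss: "sorted_wrt (<) Ls" and lLs: "length Ls = k"
    using fin cS by (simp_all add: Ls_def)
  define E where "E = (\<lambda>\<alpha>. card {\<gamma> \<in> S. \<gamma> \<ge> \<alpha>})"
  define e where "e = (\<lambda>i. Ls ! (k - i))"
  have finR: "finite R" using part by (metis finite_Un finite_atLeastAtMost)
  have Ee: "E (Ls ! m) = k - m" if "m < k" for m
    using card_ge_nth[OF ss, of m] that by (simp add: E_def sLs lLs)
  have key: "fac val l b r \<alpha> x = Fpow (\<alpha> - 1) (brk (E \<alpha>)) x / Fpow (k - E \<alpha>) (brk (E \<alpha>)) x"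
    if a: "\<alpha> \<in> S" for \<alpha>
  proof -
    have el: "ell l \<alpha> = E \<alpha>" by (simp add: ell_def E_def sl)
    have rl: "rr r \<alpha> = card {\<gamma> \<in> R. \<gamma> < \<alpha>}" by (simp add: rr_def sr)
    have c1: "card {\<gamma> \<in> S. \<gamma> < \<alpha>} + E \<alpha> = k"
    proof -
      have eqS: "S = {\<gamma> \<in> S. \<gamma> < \<alpha>} \<union> {\<gamma> \<in> S. \<gamma> \<ge> \<alpha>}" by auto
      have "card ({\<gamma> \<in> S. \<gamma> < \<alpha>} \<union> {\<gamma> \<in> S. \<gamma> \<ge> \<alpha>}) = card {\<gamma> \<in> S. \<gamma> < \<alpha>} + card {\<gamma> \<in> S. \<gamma> \<ge> \<alpha>}"
        by (rule card_Un_disjoint) (use fin in auto)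
      hence "card S = card {\<gamma> \<in> S. \<gamma> < \<alpha>} + card {\<gamma> \<in> S. \<gamma> \<ge> \<alpha>}"
        using eqS by metis
      thus ?thesis using cS E_def by simp
    qed
    have an: "\<alpha> \<in> {1..n}" using part a by blast
    have c2: "card {\<gamma> \<in> R. \<gamma> < \<alpha>} + card {\<gamma> \<in> S. \<gamma> < \<alpha>} + 1 = \<alpha> - 1"
    proof -
      have "{1..<\<alpha>} = ({\<gamma> \<in> R. \<gamma> < \<alpha>} \<union> {\<gamma> \<in> S. \<gamma> < \<alpha>}) \<union> {1}"
      proof (rule set_eqI)
        fix y
        have "y \<in> {1..<\<alpha>} \<Longrightarrow> y \<in> {1..n}" using an by auto
        hence "y \<in> {1..<\<alpha>} \<Longrightarrow> y \<in> S \<or> y \<in> R \<or> y = 1" using part by (metis Un_iff singleton_iff)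
        moreover have "y \<in> S \<or> y \<in> R \<or> y = 1 \<Longrightarrow> 1 \<le> y" using part
          by (metis Un_iff atLeastAtMost_iff le_refl)
        moreover have "1 < \<alpha>" using an d1(2) a by (cases "\<alpha> = 1") auto
        ultimately show "y \<in> {1..<\<alpha>} \<longleftrightarrow> y \<in> ({\<gamma> \<in> R. \<gamma> < \<alpha>} \<union> {\<gamma> \<in> S. \<gamma> < \<alpha>}) \<union> {1}"
          by auto
      qed
      moreover have "card (({\<gamma> \<in> R. \<gamma> < \<alpha>} \<union> {\<gamma> \<in> S. \<gamma> < \<alpha>}) \<union> {1})
          = card {\<gamma> \<in> R. \<gamma> < \<alpha>} + card {\<gamma> \<in> S. \<gamma> < \<alpha>} + 1"
      proof -
        have f1: "finite {\<gamma> \<in> R. \<gamma> < \<alpha>}" "finite {\<gamma> \<in> S. \<gamma> < \<alpha>}" using fin finR by auto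
        have "card ({\<gamma> \<in> R. \<gamma> < \<alpha>} \<union> {\<gamma> \<in> S. \<gamma> < \<alpha>}) = card {\<gamma> \<in> R. \<gamma> < \<alpha>} + card {\<gamma> \<in> S. \<gamma> < \<alpha>}"
          by (rule card_Un_disjoint[OF f1]) (use d1(1) in auto)
        moreover have "1 \<notin> {\<gamma> \<in> R. \<gamma> < \<alpha>} \<union> {\<gamma> \<in> S. \<gamma> < \<alpha>}" using d1 by auto
        ultimately show ?thesis using f1 by simp
      qed
      ultimately show ?thesis by (metis card_atLeastLessThan)
    qed
    have e1: "val b + rr r \<alpha> - ell l \<alpha> = \<alpha> - 1" using c1 c2 v el rl by simp
    have e2: "val b - ell l \<alpha> - 1 = k - E \<alpha>" using v el by simp
    show ?thesis unfolding fac_def e1 e2 by (simp only: el)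
  qed
  have "(\<Prod>\<alpha>\<in>S. fac val l b r \<alpha> x) = (\<Prod>i=1..k. Fpow (e i - 1) (brk i) x / Fpow (k - i) (brk i) x)"
  proof (rule prod.reindex_bij_witness[where i = e and j = E])
    fix \<alpha> assume a: "\<alpha> \<in> S"
    then obtain t where t: "t < k" "\<alpha> = Ls ! t" using sLs lLs by (auto simp: in_set_conv_nth)
    show "e (E \<alpha>) = \<alpha>" using t Ee by (simp add: e_def)
    show "E \<alpha> \<in> {1..k}" using t Ee by simp
    show "Fpow (e (E \<alpha>) - 1) (brk (E \<alpha>)) x / Fpow (k - E \<alpha>) (brk (E \<alpha>)) x = fac val l b r \<alpha> x"
      using key[OF a] t Ee by (simp add: e_def)
  next
    fix i assume i: "i \<in> {1..k}"
    show "E (e i) = i" using i Ee[of "k - i"] by (simp add: e_def)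
    show "e i \<in> S" using i sLs lLs by (auto simp: e_def)
  qed
  also have "\<dots> = (\<Prod>i=1..k. Fpow (e i - 1) (brk i) x) / (\<Prod>i=1..k. Fpow (k - i) (brk i) x)"
    by (rule prod_dividef)
  finally have A: "(\<Prod>\<alpha>\<in>S. fac val l b r \<alpha> x) = (\<Prod>i=1..k. Fpow (e i - 1) (brk i) x) / (\<Prod>i=1..k. Fpow (k - i) (brk i) x)" .
  have B: "(\<Prod>i=1..k. Fpow (k - i) (brk i) x) = brkfact k x"
    unfolding brkfact_def
    by (rule prod.reindex_bij_witness[where i = "\<lambda>j. k - j" and j = "\<lambda>j. k - j"]) auto
  have C: "(\<Prod>i=1..k. Fpow (e i - 1) (brk i) x) = (\<Prod>j=1..k. Fpow (rev Ls ! (j - 1) - 1) (brk j) x)"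
    by (rule prod.cong[OF refl]) (auto simp: e_def rev_nth lLs)
  have D: "wtS S x = (\<Prod>j=1..k. Fpow (rev Ls ! (j - 1) - 1) (brk j) x) / brkfact k x"
    by (simp add: wtS_def Let_def cS Ls_def)
  show ?thesis by (simp only: A B C D)
qed




lemma phi_image:
  assumes dw: "distinct w" and sw: "set w = {1..n}" and n: "n = length w" and J: "J \<subseteq> {1..n}"
  shows "(\<lambda>j. ix w j + 1) ` J = {p. 1 \<le> p \<and> p \<le> n \<and> w ! (p - 1) \<in> J}"
proof (rule set_eqI, rule iffI)
  fix p assume "p \<in> (\<lambda>j. ix w j + 1) ` J"
  then obtain j where j: "j \<in> J" "p = ix w j + 1" by auto
  have "j \<in> set w" using j J sw by auto
  thus "p \<in> {p. 1 \<le> p \<and> p \<le> n \<and> w ! (p - 1) \<in> J}" using ix_in[of j w] j n by auto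
next
  fix p assume p: "p \<in> {p. 1 \<le> p \<and> p \<le> n \<and> w ! (p - 1) \<in> J}"
  hence "ix w (w ! (p - 1)) = p - 1" using ix_nth[OF dw, of "p - 1"] n by auto
  thus "p \<in> (\<lambda>j. ix w j + 1) ` J" using p by (auto intro!: image_eqI[where x = "w ! (p - 1)"])
qed

lemma inv_distinct:
  assumes dw: "distinct w" and sw: "set w = {1..length w}"
  shows "distinct (inv_word w)"
proof -
  have "inj_on (\<lambda>j. ix w j + 1) (set [1..<length w + 1])"
  proof (rule inj_onI)
    fix i j assume i: "i \<in> set [1..<length w + 1]" and j: "j \<in> set [1..<length w + 1]"
      and e: "ix w i + 1 = ix w j + 1"
    have "i \<in> set w" "j \<in> set w" using i j sw by auto
    thus "i = j" using ix_in e by (metis add_right_cancel)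
  qed
  thus ?thesis by (simp add: inv_word_ix distinct_map)
qed




lemma main:
  "distinct w \<Longrightarrow> set w = {1..length w} \<Longrightarrow>
   (\<forall>x. wt w x = Qr (\<lambda>\<beta>. w ! (\<beta> - 1)) (incr_tree (inv_word w)) x) \<and>
   bnd (\<lambda>\<beta>. w ! (\<beta> - 1)) (incr_tree (inv_word w))"
proof (induction "length w" arbitrary: w rule: less_induct)
  case less
  show ?case
  proof (cases w)
    case Nil
    then show ?thesis by (simp add: inv_word_def incr_tree_Nil)
  next
    case (Cons v rest)
    define n where "n = length w"
    define k where "k = v - 1"
    define val where "val = (\<lambda>\<beta>. w ! (\<beta> - 1))"
    have dw: "distinct w" and sw: "set w = {1..n}" using less.prems n_def by auto
    have w0: "w ! 0 = v" using Cons by simp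
    have vin: "v \<in> {1..n}" using sw Cons by auto
    hence vk: "v = k + 1" "k < n" using k_def by auto
    define \<phi> where "\<phi> = (\<lambda>j. ix w j + 1)"
    have inv: "inv_word w = map \<phi> [1..<n+1]" by (simp add: inv_word_ix \<phi>_def n_def)
    have ixv: "ix w v = 0" using ix_nth[OF dw, of 0] Cons by simp
    have \<phi>S: "\<phi> ` J = {p. 1 \<le> p \<and> p \<le> n \<and> w ! (p - 1) \<in> J}" if "J \<subseteq> {1..n}" for J
      unfolding \<phi>_def by (rule phi_image[OF dw sw n_def that])
    have wpos: "w ! (p - 1) \<in> {1..n}" if "1 \<le> p" "p \<le> n" for p
      using that sw n_def by (metis Suc_le_eq Suc_pred' atLeastAtMost_iff less_imp_le_nat nth_mem zero_less_iff_neq_zero bot_nat_0.extremum_uniqueI diff_less zero_less_one less_le_trans)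
    define P where "P = (\<lambda>u::nat. u \<le> k)"
    define Qp where "Qp = (\<lambda>u::nat. k + 1 < u)"
    define a where "a = filter P rest"
    define bh where "bh = map (\<lambda>u. u - k - 1) (filter Qp rest)"
    define S where "S = {i. 1 \<le> i \<and> i \<le> length w \<and> w ! (i - 1) \<le> k}"
    have wt_w: "wt w = (\<lambda>x. wtS S x * wt a x * Fpow (k + 1) (wt bh) x)"
      using Cons by (simp add: Let_def k_def a_def bh_def P_def Qp_def S_def)
    have a_w: "a = filter P w" using Cons vk by (simp add: a_def P_def)
    have b_w: "filter Qp rest = filter Qp w" using Cons vk by (simp add: Qp_def)
    have drest: "distinct rest" and vrest: "v \<notin> set rest" using dw Cons by auto
    have srest: "set rest = {1..n} - {v}" using sw Cons vrest by auto
    have da: "distinct a" using drest by (simp add: a_def)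
    have sa: "set a = {1..k}"
    proof (rule set_eqI)
      fix x
      have "x \<in> set a \<longleftrightarrow> (1 \<le> x \<and> x \<le> n \<and> x \<noteq> v) \<and> x \<le> k" by (simp add: a_def P_def srest)
      thus "x \<in> set a \<longleftrightarrow> x \<in> {1..k}" using vk by auto
    qed
    have la: "length a = k" using distinct_card[OF da] sa by simp
    have sb: "set bh = {1..n - k - 1}"
    proof -
      have "set (filter Qp rest) = {k+2..n}"
      proof (rule set_eqI)
        fix x
        have "x \<in> set (filter Qp rest) \<longleftrightarrow> (1 \<le> x \<and> x \<le> n \<and> x \<noteq> v) \<and> k + 1 < x" by (simp add: Qp_def srest)
        thus "x \<in> set (filter Qp rest) \<longleftrightarrow> x \<in> {k+2..n}" using vk by auto
      qed
      thus ?thesis unfolding bh_def set_map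
        by (auto simp: image_iff intro!: bexI[where x = "_ + k + 1"])
    qed
    have db: "distinct bh"
    proof -
      have "inj_on (\<lambda>u. u - k - 1) (set (filter Qp rest))"
        by (auto simp: inj_on_def Qp_def)
      thus ?thesis using drest by (simp add: bh_def distinct_map)
    qed
    have lb: "length bh = n - k - 1" using distinct_card[OF db] sb by simp
    have IHa: "(\<forall>x. wt a x = Qr (\<lambda>\<beta>. a ! (\<beta> - 1)) (incr_tree (inv_word a)) x) \<and>
        bnd (\<lambda>\<beta>. a ! (\<beta> - 1)) (incr_tree (inv_word a))"
      using less.hyps[of a] la vk da sa n_def by simp
    have IHb: "(\<forall>x. wt bh x = Qr (\<lambda>\<beta>. bh ! (\<beta> - 1)) (incr_tree (inv_word bh)) x) \<and>
        bnd (\<lambda>\<beta>. bh ! (\<beta> - 1)) (incr_tree (inv_word bh))"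
      using less.hyps[of bh] lb vk db sb n_def by simp
    define Lw where "Lw = map \<phi> [1..<k+1]"
    define Rw where "Rw = map \<phi> [k+2..<n+1]"
    have upt: "[1..<n+1] = [1..<k+1] @ (k+1) # [k+2..<n+1]"
    proof -
      have "[1..<n+1] = [1..<k+1] @ [k+1..<n+1]" using upt_add_eq_append[of 1 "k+1" "n - k"] vk by simp
      moreover have "[k+1..<n+1] = (k+1) # [k+2..<n+1]" using upt_conv_Cons[of "k+1" "n+1"] vk by simp
      ultimately show ?thesis by simp
    qed
    have \<phi>1: "\<phi> (k+1) = 1" using ixv vk by (simp add: \<phi>_def)
    have invd: "inv_word w = Lw @ 1 # Rw" using inv upt \<phi>1 by (simp add: Lw_def Rw_def)
    have sLw: "set Lw = {p. 1 \<le> p \<and> p \<le> n \<and> w ! (p - 1) \<in> {1..k}}"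
    proof -
      have e: "set [1..<k+1] = {1..k}" by (simp only: set_upt atLeastLessThanSuc_atLeastAtMost Suc_eq_plus1[symmetric])
      have "set Lw = \<phi> ` {1..k}" unfolding Lw_def set_map e ..
      also have "\<dots> = {p. 1 \<le> p \<and> p \<le> n \<and> w ! (p - 1) \<in> {1..k}}" by (rule \<phi>S) (use vk in auto)
      finally show ?thesis .
    qed
    have sRw: "set Rw = {p. 1 \<le> p \<and> p \<le> n \<and> w ! (p - 1) \<in> {k+2..n}}"
    proof -
      have e: "set [k+2..<n+1] = {k+2..n}" by (simp only: set_upt atLeastLessThanSuc_atLeastAtMost Suc_eq_plus1[symmetric])
      have "set Rw = \<phi> ` {k+2..n}" unfolding Rw_def set_map e ..
      also have "\<dots> = {p. 1 \<le> p \<and> p \<le> n \<and> w ! (p - 1) \<in> {k+2..n}}" by (rule \<phi>S) auto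
      finally show ?thesis .
    qed
    have sinv: "set (inv_word w) = {1..n}"
    proof -
      have e: "set [1..<n+1] = {1..n}" by (simp only: set_upt atLeastLessThanSuc_atLeastAtMost Suc_eq_plus1[symmetric])
      have "set (inv_word w) = \<phi> ` {1..n}" unfolding inv set_map e ..
      also have "\<dots> = {p. 1 \<le> p \<and> p \<le> n \<and> w ! (p - 1) \<in> {1..n}}" by (rule \<phi>S) auto
      also have "\<dots> = {1..n}"
      proof (rule set_eqI, rule iffI)
        fix p assume "p \<in> {p. 1 \<le> p \<and> p \<le> n \<and> w ! (p - 1) \<in> {1..n}}"
        thus "p \<in> {1..n}" by simp
      next
        fix p assume "p \<in> {1..n}"
        thus "p \<in> {p. 1 \<le> p \<and> p \<le> n \<and> w ! (p - 1) \<in> {1..n}}" using wpos[of p] by simp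
      qed
      finally show ?thesis .
    qed
    have dinv: "distinct (inv_word w)" using inv_distinct dw sw n_def by simp
    have one_L: "1 \<notin> set Lw" using sLw w0 vk by auto
    have minv: "Min (set (inv_word w)) = 1" unfolding sinv by (rule Min_eqI) (use vk in auto)
    have tree: "incr_tree (inv_word w) = Node (incr_tree Lw) 1 (incr_tree Rw)"
    proof -
      have ne: "inv_word w \<noteq> []" using invd by simp
      have t: "takeWhile (\<lambda>a. a \<noteq> 1) (Lw @ 1 # Rw) = Lw" using one_L by (subst takeWhile_append2) auto
      have d: "dropWhile (\<lambda>a. a \<noteq> 1) (Lw @ 1 # Rw) = 1 # Rw" using one_L by (subst dropWhile_append2) auto
      have m2: "Min (set (Lw @ 1 # Rw)) = 1" using minv invd by metis
      show ?thesis by (subst incr_tree_Node[OF ne]) (simp only: invd m2 t d list.sel)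
    qed

    have wnth: "w ! (p - 1) \<in> set w" "p - 1 < length w" if "1 \<le> p" "p \<le> n" for p
      using that n_def by auto
    define h where "h = (\<lambda>p. length (filter P (take (p - 1) w)) + 1)"
    define va where "va = (\<lambda>\<beta>. a ! (\<beta> - 1))"
    have inva: "inv_word a = map h Lw"
    proof -
      have "inv_word a = map (\<lambda>j. ix a j + 1) [1..<k+1]" by (simp add: inv_word_ix la)
      also have "\<dots> = map (h \<circ> \<phi>) [1..<k+1]"
      proof (rule map_cong[OF refl])
        fix j assume "j \<in> set [1..<k+1]"
        hence j: "1 \<le> j" "j \<le> k" by auto
        hence jw: "j \<in> set w" using sw vk by auto
        define p0 where "p0 = ix w j"
        have p0: "p0 < length w" "w ! p0 = j" using ix_in[OF jw] p0_def by auto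
        have Pj: "P (w ! p0)" using p0 j by (simp add: P_def)
        have r: "length (filter P (take p0 w)) < length a" "a ! length (filter P (take p0 w)) = j"
          using filter_nth_rank[OF p0(1), of P] Pj p0 a_w by auto
        have "ix a j = length (filter P (take p0 w))" using ix_nth[OF da r(1)] r(2) by simp
        thus "ix a j + 1 = (h \<circ> \<phi>) j" by (simp add: h_def \<phi>_def p0_def)
      qed
      finally show ?thesis by (simp add: Lw_def)
    qed
    have Lw_P: "P (w ! (p - 1))" "1 \<le> p" "p \<le> n" if "p \<in> set Lw" for p
      using that sLw by (auto simp: P_def)
    have smh: "strict_mono_on (set Lw) h"
    proof (rule strict_mono_onI)
      fix p q assume p: "p \<in> set Lw" and q: "q \<in> set Lw" and pq: "p < q"
      have "length (filter P (take (p - 1) w)) < length (filter P (take (q - 1) w))"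
        using rank_mono[of "p - 1" "q - 1" w P] Lw_P[OF p] Lw_P[OF q] pq n_def by simp
      thus "h p < h q" by (simp add: h_def)
    qed
    have vah: "va (h p) = val p" if "p \<in> set Lw" for p
    proof -
      have "p - 1 < length w" using Lw_P[OF that] n_def by simp
      thus ?thesis using filter_nth_rank(2)[of "p - 1" w P] Lw_P[OF that]
        by (simp add: va_def h_def val_def a_w)
    qed
    have left_Q: "Qr val (incr_tree Lw) x = wt a x" for x
    proof -
      have "wt a x = Qr va (incr_tree (inv_word a)) x" using IHa by (simp add: va_def)
      also have "\<dots> = Qr va (map_tree h (incr_tree Lw)) x" by (simp add: inva incr_tree_map[OF smh])
      also have "\<dots> = Qr (va \<circ> h) (incr_tree Lw) x" by (rule Qr_map) (simp add: set_incr_tree smh)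
      also have "\<dots> = Qr val (incr_tree Lw) x" by (rule Qr_cong) (simp add: set_incr_tree vah)
      finally show ?thesis by simp
    qed
    have left_b: "bnd val (incr_tree Lw)"
    proof -
      have "bnd va (incr_tree (inv_word a))" using IHa by (simp add: va_def)
      hence "bnd va (map_tree h (incr_tree Lw))" by (simp add: inva incr_tree_map[OF smh])
      hence "bnd (va \<circ> h) (incr_tree Lw)" by (subst (asm) bnd_map) (simp_all add: set_incr_tree smh)
      thus ?thesis by (subst (asm) bnd_cong[where val' = val]) (simp_all add: set_incr_tree vah)
    qed

    define g where "g = (\<lambda>p. length (filter Qp (take (p - 1) w)) + 1)"
    define vb where "vb = (\<lambda>\<beta>. bh ! (\<beta> - 1))"
    have bh_w: "bh = map (\<lambda>u. u - k - 1) (filter Qp w)" using b_w by (simp add: bh_def)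
    have invb: "inv_word bh = map g Rw"
    proof (rule nth_equalityI)
      show "length (inv_word bh) = length (map g Rw)" by (simp add: inv_word_def lb Rw_def del: upt_Suc)
    next
      fix i assume "i < length (inv_word bh)"
      hence i: "i < n - k - 1" by (simp add: inv_word_def lb del: upt_Suc)
      have l1: "inv_word bh ! i = ix bh (i + 1) + 1" using i by (simp add: inv_word_ix lb del: upt_Suc)
      have l2: "map g Rw ! i = g (\<phi> (k + 2 + i))" using i by (simp add: Rw_def del: upt_Suc)
      define J where "J = k + 2 + i"
      have Jw: "J \<in> set w" using sw i J_def by auto
      define p0 where "p0 = ix w J"
      have p0: "p0 < length w" "w ! p0 = J" using ix_in[OF Jw] p0_def by auto
      have QJ: "Qp (w ! p0)" using p0 by (simp add: Qp_def J_def)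
      have r: "length (filter Qp (take p0 w)) < length (filter Qp w)" "filter Qp w ! length (filter Qp (take p0 w)) = J"
        using filter_nth_rank[OF p0(1), of Qp] QJ p0 by auto
      have r2: "bh ! length (filter Qp (take p0 w)) = i + 1" using r by (simp add: bh_w J_def)
      have r3: "length (filter Qp (take p0 w)) < length bh" using r by (simp add: bh_w)
      have "ix bh (i + 1) = length (filter Qp (take p0 w))" using ix_nth[OF db r3] r2 by simp
      thus "inv_word bh ! i = map g Rw ! i" using l1 l2 by (simp add: g_def \<phi>_def p0_def J_def)
    qed
    have Rw_Q: "Qp (w ! (p - 1))" "1 \<le> p" "p \<le> n" if "p \<in> set Rw" for p
      using that sRw by (auto simp: Qp_def)
    have smg: "strict_mono_on (set Rw) g"
    proof (rule strict_mono_onI)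
      fix p q assume p: "p \<in> set Rw" and q: "q \<in> set Rw" and pq: "p < q"
      have "length (filter Qp (take (p - 1) w)) < length (filter Qp (take (q - 1) w))"
        using rank_mono[of "p - 1" "q - 1" w Qp] Rw_Q[OF p] Rw_Q[OF q] pq n_def by simp
      thus "g p < g q" by (simp add: g_def)
    qed
    have vbg: "val p = vb (g p) + (k + 1)" if "p \<in> set Rw" for p
    proof -
      have pl: "p - 1 < length w" using Rw_Q[OF that] n_def by simp
      have r: "length (filter Qp (take (p - 1) w)) < length (filter Qp w)"
          "filter Qp w ! length (filter Qp (take (p - 1) w)) = w ! (p - 1)"
        using filter_nth_rank[OF pl, of Qp] Rw_Q[OF that] by auto
      have "vb (g p) = w ! (p - 1) - k - 1" using r by (simp add: vb_def g_def bh_w)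
      thus ?thesis using Rw_Q(1)[OF that] by (simp add: val_def Qp_def)
    qed
    have bvbg: "bnd (vb \<circ> g) (incr_tree Rw)"
    proof -
      have "bnd vb (incr_tree (inv_word bh))" using IHb by (simp add: vb_def)
      hence "bnd vb (map_tree g (incr_tree Rw))" by (simp add: invb incr_tree_map[OF smg])
      thus ?thesis by (subst (asm) bnd_map) (simp_all add: set_incr_tree smg)
    qed
    have right_Q: "Qr val (incr_tree Rw) x = Fpow (k + 1) (wt bh) x" for x
    proof -
      have "Qr val (incr_tree Rw) x = Qr (\<lambda>\<beta>. (vb \<circ> g) \<beta> + (k + 1)) (incr_tree Rw) x"
        by (rule Qr_cong) (simp add: set_incr_tree vbg)
      also have "\<dots> = Qr (vb \<circ> g) (incr_tree Rw) (\<lambda>i. x (i + (k + 1)))" by (rule Qr_shift[OF bvbg])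
      also have "\<dots> = Qr vb (map_tree g (incr_tree Rw)) (\<lambda>i. x (i + (k + 1)))"
        by (rule Qr_map[symmetric]) (simp add: set_incr_tree smg)
      also have "\<dots> = Qr vb (incr_tree (inv_word bh)) (\<lambda>i. x (i + (k + 1)))"
        by (simp add: invb incr_tree_map[OF smg])
      also have "\<dots> = wt bh (\<lambda>i. x (i + (k + 1)))" using IHb by (simp add: vb_def)
      finally show ?thesis by (simp add: Fpow_def)
    qed
    have right_b: "bnd val (incr_tree Rw)"
      by (rule bnd_mono[OF bvbg]) (simp add: set_incr_tree vbg)

    have dall: "distinct (Lw @ 1 # Rw)" using dinv invd by metis
    have dLw: "distinct Lw" and dj: "set Lw \<inter> set Rw = {}" and oR: "1 \<notin> set Rw" and oL: "1 \<notin> set Lw"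
      using dall by auto
    have cS: "card (set Lw) = k" using distinct_card[OF dLw] by (simp add: Lw_def)
    have part: "set Lw \<union> set Rw \<union> {1} = {1..n}" using sinv invd by auto
    have val1: "val 1 = k + 1" using w0 vk by (simp add: val_def)
    have Sset: "S = set Lw"
    proof (rule set_eqI)
      fix p
      show "p \<in> S \<longleftrightarrow> p \<in> set Lw"
        using wpos[of p] unfolding sLw S_def n_def[symmetric] by auto
    qed
    have rootF: "wtS S x = (\<Prod>\<alpha>\<in>set Lw. fac val (incr_tree Lw) 1 (incr_tree Rw) \<alpha> x)" for x
      unfolding Sset
      by (rule root[where S="set Lw" and R="set Rw" and l="incr_tree Lw" and r="incr_tree Rw" and b=1 and val=val and k=k and n=n])
         (simp, fact cS, fact part, fact dj, fact oL, fact oR, rule set_incr_tree, rule set_incr_tree, fact val1)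
    have "(\<forall>x. wt w x = Qr val (incr_tree (inv_word w)) x) \<and> bnd val (incr_tree (inv_word w))"
    proof
      show "\<forall>x. wt w x = Qr val (incr_tree (inv_word w)) x"
      proof
        fix x
        show "wt w x = Qr val (incr_tree (inv_word w)) x"
          unfolding tree wt_w by (simp add: rootF left_Q right_Q set_incr_tree)
      qed
      show "bnd val (incr_tree (inv_word w))"
        unfolding tree using left_b right_b cS val1 by (simp add: set_incr_tree)
    qed
    thus ?thesis unfolding val_def .
  qed
qed



theorem proposition6p3:
  fixes w :: "nat list" and n :: nat and x :: "nat \<Rightarrow> real"
  assumes "distinct w" and "set w = {1..n}"
    and "\<forall>i. 0 < x i"
  shows "wt w x =
    (\<Prod>t \<in> subtrees (incr_tree (inv_word w)).
       case t of Leaf \<Rightarrow> 1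
       | Node l \<beta> r \<Rightarrow> (\<Prod>\<alpha> \<in> set_tree l. Nfac w l \<beta> r \<alpha> x / Dfac w l \<beta> \<alpha> x))"
proof -
  have n: "length w = n" using distinct_card[OF assms(1)] assms(2) by simp
  have sw: "set w = {1..length w}" using assms(2) n by simp
  have m: "wt w x = Qr (\<lambda>\<beta>. w ! (\<beta> - 1)) (incr_tree (inv_word w)) x"
    using main[OF assms(1) sw] by blast
  have d: "distinct (inorder (incr_tree (inv_word w)))"
    using inv_distinct[OF assms(1) sw] by (simp add: inorder_incr_tree)
  have eq: "(\<lambda>t. case t of Leaf \<Rightarrow> 1 | Node l \<beta> r \<Rightarrow> (\<Prod>\<alpha> \<in> set_tree l. Nfac w l \<beta> r \<alpha> x / Dfac w l \<beta> \<alpha> x))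
      = (\<lambda>t. case t of Leaf \<Rightarrow> 1 | Node l \<beta> r \<Rightarrow> (\<Prod>\<alpha> \<in> set_tree l. fac (\<lambda>\<beta>. w ! (\<beta> - 1)) l \<beta> r \<alpha> x))"
    by (rule ext) (simp split: tree.split add: Nfac_def Dfac_def fac_def)
  show ?thesis unfolding eq using prod_subtrees[OF d, of "\<lambda>\<beta>. w ! (\<beta> - 1)" x] m by simp
qed

end
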